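(* Let $\mathbb{X}$ be a Cartesian $k$-differential abstract Kleisli category with abstract Kleisli structure $(\mathsf{S},\epsilon,\vartheta)$. Then the subcategory $\vartheta\text{-}\mathsf{nat}[\mathbb{X}]$ of $\vartheta$-natural maps is a sub-Cartesian $k$-differential category of $\mathbb{X}$: it contains all maps $0:A\to\ast$ and all projections, is closed under pairing, under the $k$-module operations on hom-sets ($r\cdot f+s\cdot g$ and $0$), and under the differential combinator (if $f$ is $\vartheta$-natural then so is $\mathsf{D}[f]$), and hence is itself a Cartesian $k$-differential category with the structure inherited from $\mathbb{X}$.
   Context: Fix a commutative semiring $k$. A left $k$-linear category is a category $\mathbb{X}$ in which each hom-set $\mathbb{X}(A,B)$ is a $k$-module (scalar multiplication $r\cdot f$, addition $+$, zero $0$) such that precomposition is $k$-linear: $(r\cdot f+s\cdot g)\circ x=r\cdot(f\circ x)+s\cdot(g\circ x)$. A map $f$ is $k$-linear if $f\circ(r\cdot x+s\cdot y)=r\cdot(f\circ x)+s\cdot(f\circ y)$ for all suitable $x,y$ and $r,s\in k$. A Cartesian left $k$-linear category is a left $k$-linear category with finite products (terminal object $\ast$, projections $\pi_j:A_1\times\cdots\times A_n\to A_j$, pairing $\langle-,\dots,-\rangle$) in which all projections are $k$-linear. A Cartesian $k$-differential category is a Cartesian left $k$-linear category equipped with a differential combinator $\mathsf{D}$ assigning to each $f:A\to B$ a map $\mathsf{D}[f]:A\times A\to B$ such that: [CD.1] $\mathsf{D}[r\cdot f+s\cdot g]=r\cdot\mathsf{D}[f]+s\cdot\mathsf{D}[g]$;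 [CD.2] $\mathsf{D}[f]\circ\langle\pi_1,r\cdot\pi_2+s\cdot\pi_3\rangle=r\cdot(\mathsf{D}[f]\circ\langle\pi_1,\pi_2\rangle)+s\cdot(\mathsf{D}[f]\circ\langle\pi_1,\pi_3\rangle)$ (as maps $A\times A\times A\to B$); [CD.3] $\mathsf{D}[1_A]=\pi_2$ and, for $\pi_j:A_1\times\cdots\times A_n\to A_j$, $\mathsf{D}[\pi_j]=\pi_{n+j}$; [CD.4] $\mathsf{D}[\langle f_1,\dots,f_n\rangle]=\langle\mathsf{D}[f_1],\dots,\mathsf{D}[f_n]\rangle$; [CD.5] $\mathsf{D}[g\circ f]=\mathsf{D}[g]\circ\langle f\circ\pi_1,\mathsf{D}[f]\rangle$; [CD.6] $\mathsf{D}[\mathsf{D}[f]]\circ\langle\pi_1,0,0,\pi_2\rangle=\mathsf{D}[f]$; [CD.7] $\mathsf{D}[\mathsf{D}[f]]\circ\langle\pi_1,\pi_2,\pi_3,\pi_4\rangle=\mathsf{D}[\mathsf{D}[f]]\circ\langle\pi_1,\pi_3,\pi_2,\pi_4\rangle$ (identifying $(A\times A)\times(A\times A)$ with $A\times A\times A\times A$). A map $f$ is $\mathsf{D}$-linear if $\mathsf{D}[f]=f\circ\pi_2$. For Cartesian left $k$-linear categories $\mathbb{X},\mathbb{Y}$, a strong Cartesian $k$-linear functor is a functor $\mathsf{F}:\mathbb{X}\to\mathbb{Y}$ such that $\mathsf{F}(\ast)\to\ast$ is an isomorphism, the canonical maps $\omega_{A_1,\dots,A_n}=\langle\mathsf{F}(\pi_1),\dots,\mathsf{F}(\pi_n)\rangle:\mathsf{F}(A_1\times\cdots\times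 A_n)\to\mathsf{F}(A_1)\times\cdots\times\mathsf{F}(A_n)$ are isomorphisms, and $\mathsf{F}(r\cdot f+s\cdot g)=r\cdot\mathsf{F}(f)+s\cdot\mathsf{F}(g)$. For Cartesian $k$-differential categories, a strong Cartesian $k$-differential functor is a strong Cartesian $k$-linear functor with $\mathsf{D}[\mathsf{F}(f)]=\mathsf{F}(\mathsf{D}[f])\circ\omega^{-1}_{A,A}$ for all $f:A\to B$. An abstract Kleisli structure on a category $\mathbb{X}$ is a triple $(\mathsf{S},\epsilon,\vartheta)$ of an endofunctor $\mathsf{S}$, a natural transformation $\epsilon_A:\mathsf{S}(A)\to A$, and a family of maps $\vartheta_A:A\to\mathsf{S}(A)$ (not necessarily natural) such that $\vartheta_{\mathsf{S}(A)}$ is natural in $A$ and $\epsilon_A\circ\vartheta_A=1_A$, $\epsilon_{\mathsf{S}(A)}\circ\mathsf{S}(\vartheta_A)=1_{\mathsf{S}(A)}$, $\vartheta_{\mathsf{S}(A)}\circ\vartheta_A=\mathsf{S}(\vartheta_A)\circ\vartheta_A$. A map $f:A\to B$ is $\vartheta$-natural if $\vartheta_B\circ f=\mathsf{S}(f)\circ\vartheta_A$; $\vartheta\text{-}\mathsf{nat}[\mathbb{X}]$ denotes the subcategory of $\vartheta$-natural maps. A Cartesian $k$-differential abstract Kleisli category is a Cartesian $k$-differential category $\mathbb{X}$ with an abstract Kleisli structure $(\mathsf{S},\epsilon,\vartheta)$ such that all projections are $\vartheta$-natural, $\mathsf{S}$ is a strong Cartesian $k$-differential functor, and every $\epsilon_A$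 and $\vartheta_A$ is $\mathsf{D}$-linear. *)

theory Defs
  imports Main
begin

text \<open>
  Composition comp g f means g after f.  Finite products
  are presented by a chosen terminal object and chosen binary products
  (from which all finite products are obtained by iteration).
\<close>

record ('o, 'm, 'k) cdak_struct =
  Ob    :: "'o set"
  Arr   :: "'m set"
  dom   :: "'m \<Rightarrow> 'o"
  cod   :: "'m \<Rightarrow> 'o"
  comp  :: "'m \<Rightarrow> 'm \<Rightarrow> 'm"
  ident :: "'o \<Rightarrow> 'm"
  smul  :: "'k \<Rightarrow> 'm \<Rightarrow> 'm"
  add   :: "'m \<Rightarrow> 'm \<Rightarrow> 'm"
  zero  :: "'o \<Rightarrow> 'o \<Rightarrow> 'm"
  termo :: "'o"
  prod  :: "'o \<Rightarrow> 'o \<Rightarrow> 'o"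
  p1    :: "'o \<Rightarrow> 'o \<Rightarrow> 'm"
  p2    :: "'o \<Rightarrow> 'o \<Rightarrow> 'm"
  pair  :: "'m \<Rightarrow> 'm \<Rightarrow> 'm"
  Dif   :: "'m \<Rightarrow> 'm"
  S_ob  :: "'o \<Rightarrow> 'o"
  S_ar  :: "'m \<Rightarrow> 'm"
  eps   :: "'o \<Rightarrow> 'm"
  theta :: "'o \<Rightarrow> 'm"

definition Hom :: "('o, 'm, 'k, 'z) cdak_struct_scheme \<Rightarrow> 'o \<Rightarrow> 'o \<Rightarrow> 'm set" where
  "Hom C A B = {f \<in> Arr C. dom C f = A \<and> cod C f = B}"

definition is_category :: "('o, 'm, 'k, 'z) cdak_struct_scheme \<Rightarrow> bool" where
  "is_category C \<longleftrightarrow>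
     (\<forall>f \<in> Arr C. dom C f \<in> Ob C \<and> cod C f \<in> Ob C) \<and>
     (\<forall>A \<in> Ob C. ident C A \<in> Hom C A A) \<and>
     (\<forall>A \<in> Ob C. \<forall>B \<in> Ob C. \<forall>E \<in> Ob C. \<forall>f \<in> Hom C A B. \<forall>g \<in> Hom C B E.
         comp C g f \<in> Hom C A E) \<and>
     (\<forall>f \<in> Arr C. comp C f (ident C (dom C f)) = f \<and> comp C (ident C (cod C f)) f = f) \<and>
     (\<forall>f \<in> Arr C. \<forall>g \<in> Arr C. \<forall>h \<in> Arr C. cod C f = dom C g \<longrightarrow> cod C g = dom C h \<longrightarrow>
         comp C h (comp C g f) = comp C (comp C h g) f)"

definition hom_modules :: "('o, 'm, 'k::comm_semiring_1, 'z) cdak_struct_scheme \<Rightarrow> bool" where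
  "hom_modules C \<longleftrightarrow>
     (\<forall>A \<in> Ob C. \<forall>B \<in> Ob C.
        zero C A B \<in> Hom C A B \<and>
        (\<forall>f \<in> Hom C A B. \<forall>g \<in> Hom C A B. add C f g \<in> Hom C A B) \<and>
        (\<forall>r. \<forall>f \<in> Hom C A B. smul C r f \<in> Hom C A B) \<and>
        (\<forall>f \<in> Hom C A B. \<forall>g \<in> Hom C A B. \<forall>h \<in> Hom C A B.
            add C (add C f g) h = add C f (add C g h)) \<and>
        (\<forall>f \<in> Hom C A B. \<forall>g \<in> Hom C A B. add C f g = add C g f) \<and>
        (\<forall>f \<in> Hom C A B. add C f (zero C A B) = f) \<and>
        (\<forall>r. \<forall>f \<in> Hom C A B. \<forall>g \<in> Hom C A B.
            smul C r (add C f g) = add C (smul C r f) (smul C r g)) \<and>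
        (\<forall>r s. \<forall>f \<in> Hom C A B. smul C (r + s) f = add C (smul C r f) (smul C s f)) \<and>
        (\<forall>r s. \<forall>f \<in> Hom C A B. smul C (r * s) f = smul C r (smul C s f)) \<and>
        (\<forall>f \<in> Hom C A B. smul C 1 f = f) \<and>
        (\<forall>f \<in> Hom C A B. smul C 0 f = zero C A B) \<and>
        (\<forall>r. smul C r (zero C A B) = zero C A B))"

definition left_k_linear_cat :: "('o, 'm, 'k::comm_semiring_1, 'z) cdak_struct_scheme \<Rightarrow> bool" where
  "left_k_linear_cat C \<longleftrightarrow> is_category C \<and> hom_modules C \<and>
     (\<forall>X \<in> Ob C. \<forall>A \<in> Ob C. \<forall>B \<in> Ob C. \<forall>r s. \<forall>f \<in> Hom C A B. \<forall>g \<in> Hom C A B. \<forall>x \<in> Hom C X A.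
        comp C (add C (smul C r f) (smul C s g)) x
          = add C (smul C r (comp C f x)) (smul C s (comp C g x)))"

definition k_linear_map :: "('o, 'm, 'k::comm_semiring_1, 'z) cdak_struct_scheme \<Rightarrow> 'm \<Rightarrow> bool" where
  "k_linear_map C f \<longleftrightarrow> f \<in> Arr C \<and>
     (\<forall>X \<in> Ob C. \<forall>r s. \<forall>x \<in> Hom C X (dom C f). \<forall>y \<in> Hom C X (dom C f).
        comp C f (add C (smul C r x) (smul C s y))
          = add C (smul C r (comp C f x)) (smul C s (comp C f y)))"

definition has_finite_products :: "('o, 'm, 'k, 'z) cdak_struct_scheme \<Rightarrow> bool" where
  "has_finite_products C \<longleftrightarrow>
     termo C \<in> Ob C \<and>
     (\<forall>A \<in> Ob C. \<exists>!t. t \<in> Hom C A (termo C)) \<and>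
     (\<forall>A \<in> Ob C. \<forall>B \<in> Ob C.
        prod C A B \<in> Ob C \<and>
        p1 C A B \<in> Hom C (prod C A B) A \<and>
        p2 C A B \<in> Hom C (prod C A B) B \<and>
        (\<forall>X \<in> Ob C. \<forall>f \<in> Hom C X A. \<forall>g \<in> Hom C X B.
           pair C f g \<in> Hom C X (prod C A B) \<and>
           comp C (p1 C A B) (pair C f g) = f \<and>
           comp C (p2 C A B) (pair C f g) = g) \<and>
        (\<forall>X \<in> Ob C. \<forall>h \<in> Hom C X (prod C A B).
           pair C (comp C (p1 C A B) h) (comp C (p2 C A B) h) = h))"

definition cartesian_left_k_linear_cat :: "('o, 'm, 'k::comm_semiring_1, 'z) cdak_struct_scheme \<Rightarrow> bool" where
  "cartesian_left_k_linear_cat C \<longleftrightarrow> left_k_linear_cat C \<and> has_finite_products C \<and>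
     (\<forall>A \<in> Ob C. \<forall>B \<in> Ob C. k_linear_map C (p1 C A B) \<and> k_linear_map C (p2 C A B))"

definition cartesian_k_differential_cat :: "('o, 'm, 'k::comm_semiring_1, 'z) cdak_struct_scheme \<Rightarrow> bool" where
  "cartesian_k_differential_cat C \<longleftrightarrow> cartesian_left_k_linear_cat C \<and>
     (\<forall>A \<in> Ob C. \<forall>B \<in> Ob C. \<forall>f \<in> Hom C A B. Dif C f \<in> Hom C (prod C A A) B) \<and>
     \<comment> \<open>CD.1\<close>
     (\<forall>A \<in> Ob C. \<forall>B \<in> Ob C. \<forall>r s. \<forall>f \<in> Hom C A B. \<forall>g \<in> Hom C A B.
        Dif C (add C (smul C r f) (smul C s g)) = add C (smul C r (Dif C f)) (smul C s (Dif C g))) \<and>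
     \<comment> \<open>CD.2, on A \<times> (A \<times> A) with projections q1 q2 q3\<close>
     (\<forall>A \<in> Ob C. \<forall>B \<in> Ob C. \<forall>r s. \<forall>f \<in> Hom C A B.
        let q1 = p1 C A (prod C A A);
            q2 = comp C (p1 C A A) (p2 C A (prod C A A));
            q3 = comp C (p2 C A A) (p2 C A (prod C A A))
        in comp C (Dif C f) (pair C q1 (add C (smul C r q2) (smul C s q3)))
           = add C (smul C r (comp C (Dif C f) (pair C q1 q2)))
                   (smul C s (comp C (Dif C f) (pair C q1 q3)))) \<and>
     \<comment> \<open>CD.3\<close>
     (\<forall>A \<in> Ob C. Dif C (ident C A) = p2 C A A) \<and>
     (\<forall>A \<in> Ob C. \<forall>B \<in> Ob C.
        Dif C (p1 C A B) = comp C (p1 C A B) (p2 C (prod C A B) (prod C A B)) \<and>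
        Dif C (p2 C A B) = comp C (p2 C A B) (p2 C (prod C A B) (prod C A B))) \<and>
     \<comment> \<open>CD.4\<close>
     (\<forall>X \<in> Ob C. \<forall>A \<in> Ob C. \<forall>B \<in> Ob C. \<forall>f \<in> Hom C X A. \<forall>g \<in> Hom C X B.
        Dif C (pair C f g) = pair C (Dif C f) (Dif C g)) \<and>
     \<comment> \<open>CD.5\<close>
     (\<forall>A \<in> Ob C. \<forall>B \<in> Ob C. \<forall>E \<in> Ob C. \<forall>f \<in> Hom C A B. \<forall>g \<in> Hom C B E.
        Dif C (comp C g f) = comp C (Dif C g) (pair C (comp C f (p1 C A A)) (Dif C f))) \<and>
     \<comment> \<open>CD.6\<close>
     (\<forall>A \<in> Ob C. \<forall>B \<in> Ob C. \<forall>f \<in> Hom C A B.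
        comp C (Dif C (Dif C f))
          (pair C (pair C (p1 C A A) (zero C (prod C A A) A))
                  (pair C (zero C (prod C A A) A) (p2 C A A)))
        = Dif C f) \<and>
     \<comment> \<open>CD.7, on (A \<times> A) \<times> (A \<times> A) with projections q1 .. q4\<close>
     (\<forall>A \<in> Ob C. \<forall>B \<in> Ob C. \<forall>f \<in> Hom C A B.
        let P = prod C A A;
            q1 = comp C (p1 C A A) (p1 C P P);
            q2 = comp C (p2 C A A) (p1 C P P);
            q3 = comp C (p1 C A A) (p2 C P P);
            q4 = comp C (p2 C A A) (p2 C P P)
        in comp C (Dif C (Dif C f)) (pair C (pair C q1 q2) (pair C q3 q4))
           = comp C (Dif C (Dif C f)) (pair C (pair C q1 q3) (pair C q2 q4)))"

definition D_linear :: "('o, 'm, 'k, 'z) cdak_struct_scheme \<Rightarrow> 'm \<Rightarrow> bool" where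
  "D_linear C f \<longleftrightarrow> Dif C f = comp C f (p2 C (dom C f) (dom C f))"

definition is_iso :: "('o, 'm, 'k, 'z) cdak_struct_scheme \<Rightarrow> 'm \<Rightarrow> bool" where
  "is_iso C f \<longleftrightarrow> f \<in> Arr C \<and>
     (\<exists>g \<in> Hom C (cod C f) (dom C f). comp C g f = ident C (dom C f) \<and> comp C f g = ident C (cod C f))"

definition is_inverse :: "('o, 'm, 'k, 'z) cdak_struct_scheme \<Rightarrow> 'm \<Rightarrow> 'm \<Rightarrow> bool" where
  "is_inverse C g f \<longleftrightarrow> f \<in> Arr C \<and> g \<in> Hom C (cod C f) (dom C f) \<and>
     comp C g f = ident C (dom C f) \<and> comp C f g = ident C (cod C f)"

definition S_endofunctor :: "('o, 'm, 'k, 'z) cdak_struct_scheme \<Rightarrow> bool" where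
  "S_endofunctor C \<longleftrightarrow>
     (\<forall>A \<in> Ob C. S_ob C A \<in> Ob C) \<and>
     (\<forall>A \<in> Ob C. \<forall>B \<in> Ob C. \<forall>f \<in> Hom C A B. S_ar C f \<in> Hom C (S_ob C A) (S_ob C B)) \<and>
     (\<forall>A \<in> Ob C. S_ar C (ident C A) = ident C (S_ob C A)) \<and>
     (\<forall>A \<in> Ob C. \<forall>B \<in> Ob C. \<forall>E \<in> Ob C. \<forall>f \<in> Hom C A B. \<forall>g \<in> Hom C B E.
        S_ar C (comp C g f) = comp C (S_ar C g) (S_ar C f))"

definition omega :: "('o, 'm, 'k, 'z) cdak_struct_scheme \<Rightarrow> 'o \<Rightarrow> 'o \<Rightarrow> 'm" where
  "omega C A B = pair C (S_ar C (p1 C A B)) (S_ar C (p2 C A B))"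

definition S_strong_cartesian_k_linear :: "('o, 'm, 'k::comm_semiring_1, 'z) cdak_struct_scheme \<Rightarrow> bool" where
  "S_strong_cartesian_k_linear C \<longleftrightarrow> S_endofunctor C \<and>
     (\<forall>t \<in> Hom C (S_ob C (termo C)) (termo C). is_iso C t) \<and>
     (\<forall>A \<in> Ob C. \<forall>B \<in> Ob C. is_iso C (omega C A B)) \<and>
     (\<forall>A \<in> Ob C. \<forall>B \<in> Ob C. \<forall>r s. \<forall>f \<in> Hom C A B. \<forall>g \<in> Hom C A B.
        S_ar C (add C (smul C r f) (smul C s g)) = add C (smul C r (S_ar C f)) (smul C s (S_ar C g)))"

definition S_strong_cartesian_k_differential :: "('o, 'm, 'k::comm_semiring_1, 'z) cdak_struct_scheme \<Rightarrow> bool" where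
  "S_strong_cartesian_k_differential C \<longleftrightarrow> S_strong_cartesian_k_linear C \<and>
     (\<forall>A \<in> Ob C. \<forall>B \<in> Ob C. \<forall>f \<in> Hom C A B. \<forall>w.
        is_inverse C w (omega C A A) \<longrightarrow> Dif C (S_ar C f) = comp C (S_ar C (Dif C f)) w)"

definition abstract_kleisli :: "('o, 'm, 'k, 'z) cdak_struct_scheme \<Rightarrow> bool" where
  "abstract_kleisli C \<longleftrightarrow> S_endofunctor C \<and>
     (\<forall>A \<in> Ob C. eps C A \<in> Hom C (S_ob C A) A) \<and>
     (\<forall>A \<in> Ob C. theta C A \<in> Hom C A (S_ob C A)) \<and>
     (\<forall>A \<in> Ob C. \<forall>B \<in> Ob C. \<forall>f \<in> Hom C A B.
        comp C (eps C B) (S_ar C f) = comp C f (eps C A)) \<and>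
     (\<forall>A \<in> Ob C. \<forall>B \<in> Ob C. \<forall>f \<in> Hom C A B.
        comp C (theta C (S_ob C B)) (S_ar C f) = comp C (S_ar C (S_ar C f)) (theta C (S_ob C A))) \<and>
     (\<forall>A \<in> Ob C. comp C (eps C A) (theta C A) = ident C A) \<and>
     (\<forall>A \<in> Ob C. comp C (eps C (S_ob C A)) (S_ar C (theta C A)) = ident C (S_ob C A)) \<and>
     (\<forall>A \<in> Ob C. comp C (theta C (S_ob C A)) (theta C A) = comp C (S_ar C (theta C A)) (theta C A))"

definition theta_natural :: "('o, 'm, 'k, 'z) cdak_struct_scheme \<Rightarrow> 'm \<Rightarrow> bool" where
  "theta_natural C f \<longleftrightarrow> f \<in> Arr C \<and>
     comp C (theta C (cod C f)) f = comp C (S_ar C f) (theta C (dom C f))"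

definition cartesian_k_differential_abstract_kleisli :: "('o, 'm, 'k::comm_semiring_1, 'z) cdak_struct_scheme \<Rightarrow> bool" where
  "cartesian_k_differential_abstract_kleisli C \<longleftrightarrow>
     cartesian_k_differential_cat C \<and> abstract_kleisli C \<and>
     (\<forall>A \<in> Ob C. \<forall>B \<in> Ob C. theta_natural C (p1 C A B) \<and> theta_natural C (p2 C A B)) \<and>
     S_strong_cartesian_k_differential C \<and>
     (\<forall>A \<in> Ob C. D_linear C (eps C A) \<and> D_linear C (theta C A))"

definition theta_nat_sub :: "('o, 'm, 'k, 'z) cdak_struct_scheme \<Rightarrow> ('o, 'm, 'k, 'z) cdak_struct_scheme" where
  "theta_nat_sub C = C\<lparr>Arr := {f \<in> Arr C. theta_natural C f}\<rparr>"

end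

theory Submission imports Defs begin

lemma restr1: "\<forall>A\<in>Obs. \<forall>B\<in>Obs. \<forall>r s. \<forall>f\<in>H A B. \<forall>g\<in>H A B. P A B r s f g \<Longrightarrow>
  \<forall>A\<in>Obs. \<forall>B\<in>Obs. \<forall>r s. \<forall>f\<in>{f \<in> H A B. Q f}. \<forall>g\<in>{f \<in> H A B. Q f}. P A B r s f g" by blast
lemma restr2: "\<forall>A\<in>Obs. \<forall>B\<in>Obs. \<forall>r s. \<forall>f\<in>H A B. P A B r s f \<Longrightarrow>
  \<forall>A\<in>Obs. \<forall>B\<in>Obs. \<forall>r s. \<forall>f\<in>{f \<in> H A B. Q f}. P A B r s f" by blast
lemma restr3: "\<forall>X\<in>Obs. \<forall>A\<in>Obs. \<forall>B\<in>Obs. \<forall>f\<in>H X A. \<forall>g\<in>H X B. P X A B f g \<Longrightarrow>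
  \<forall>X\<in>Obs. \<forall>A\<in>Obs. \<forall>B\<in>Obs. \<forall>f\<in>{f \<in> H X A. Q f}. \<forall>g\<in>{f \<in> H X B. Q f}. P X A B f g" by blast
lemma restr4: "\<forall>A\<in>Obs. \<forall>B\<in>Obs. \<forall>E\<in>Obs. \<forall>f\<in>H A B. \<forall>g\<in>H B E. P A B E f g \<Longrightarrow>
  \<forall>A\<in>Obs. \<forall>B\<in>Obs. \<forall>E\<in>Obs. \<forall>f\<in>{f \<in> H A B. Q f}. \<forall>g\<in>{f \<in> H B E. Q f}. P A B E f g" by blast
lemma restr5: "\<forall>A\<in>Obs. \<forall>B\<in>Obs. \<forall>f\<in>H A B. P A B f \<Longrightarrow>
  \<forall>A\<in>Obs. \<forall>B\<in>Obs. \<forall>f\<in>{f \<in> H A B. Q f}. P A B f" by blast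

locale cdak =
  fixes C :: "('o, 'm, 'k::comm_semiring_1) cdak_struct"
  assumes ax: "cartesian_k_differential_abstract_kleisli C"
begin

lemma CKD: "cartesian_k_differential_cat C" and AK: "abstract_kleisli C"
  and PN: "\<forall>A\<in>Ob C. \<forall>B\<in>Ob C. theta_natural C (p1 C A B) \<and> theta_natural C (p2 C A B)"
  and SD: "S_strong_cartesian_k_differential C"
  and DL: "\<forall>A\<in>Ob C. D_linear C (eps C A) \<and> D_linear C (theta C A)"
  using ax unfolding cartesian_k_differential_abstract_kleisli_def by auto

lemma CL: "cartesian_left_k_linear_cat C" using CKD unfolding cartesian_k_differential_cat_def by auto
lemma LL: "left_k_linear_cat C" using CL unfolding cartesian_left_k_linear_cat_def by auto
lemma FP: "has_finite_products C" using CL unfolding cartesian_left_k_linear_cat_def by auto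
lemma cat: "is_category C" using LL unfolding left_k_linear_cat_def by auto
lemma HM: "hom_modules C" using LL unfolding left_k_linear_cat_def by auto
lemma SE: "S_endofunctor C" using AK unfolding abstract_kleisli_def by auto
lemma SL: "S_strong_cartesian_k_linear C" using SD unfolding S_strong_cartesian_k_differential_def by auto

lemma arr_dom[simp]: "f \<in> Arr C \<Longrightarrow> dom C f \<in> Ob C"
  and arr_cod[simp]: "f \<in> Arr C \<Longrightarrow> cod C f \<in> Ob C"
  using cat unfolding is_category_def by blast+

lemma ident_arr[simp]: "A \<in> Ob C \<Longrightarrow> ident C A \<in> Arr C"
  and dom_ident[simp]: "A \<in> Ob C \<Longrightarrow> dom C (ident C A) = A"
  and cod_ident[simp]: "A \<in> Ob C \<Longrightarrow> cod C (ident C A) = A"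
  using cat unfolding is_category_def Hom_def by blast+

lemma comp_all: assumes "f \<in> Arr C" "g \<in> Arr C" "cod C f = dom C g"
  shows "comp C g f \<in> Arr C \<and> dom C (comp C g f) = dom C f \<and> cod C (comp C g f) = cod C g"
proof -
  have h: "\<forall>A\<in>Ob C. \<forall>B\<in>Ob C. \<forall>E\<in>Ob C. \<forall>f\<in>Hom C A B. \<forall>g\<in>Hom C B E. comp C g f \<in> Hom C A E"
    using cat unfolding is_category_def by blast
  have "comp C g f \<in> Hom C (dom C f) (cod C g)"
    using h[rule_format, of "dom C f" "cod C f" "cod C g" f g] assms by (simp add: Hom_def)
  then show ?thesis by (simp add: Hom_def)
qed

lemma comp_arr[simp]: "f \<in> Arr C \<Longrightarrow> g \<in> Arr C \<Longrightarrow> cod C f = dom C g \<Longrightarrow> comp C g f \<in> Arr C"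
  and dom_comp[simp]: "f \<in> Arr C \<Longrightarrow> g \<in> Arr C \<Longrightarrow> cod C f = dom C g \<Longrightarrow> dom C (comp C g f) = dom C f"
  and cod_comp[simp]: "f \<in> Arr C \<Longrightarrow> g \<in> Arr C \<Longrightarrow> cod C f = dom C g \<Longrightarrow> cod C (comp C g f) = cod C g"
  using comp_all by blast+

lemma comp_id_r[simp]: "f \<in> Arr C \<Longrightarrow> dom C f = A \<Longrightarrow> comp C f (ident C A) = f"
  and comp_id_l[simp]: "f \<in> Arr C \<Longrightarrow> cod C f = A \<Longrightarrow> comp C (ident C A) f = f"
  using cat unfolding is_category_def by blast+

lemma assoc[simp]: "f \<in> Arr C \<Longrightarrow> g \<in> Arr C \<Longrightarrow> h \<in> Arr C \<Longrightarrow> cod C f = dom C g \<Longrightarrow> cod C g = dom C h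
  \<Longrightarrow> comp C (comp C h g) f = comp C h (comp C g f)"
  using cat unfolding is_category_def by metis

lemma HM': assumes "A \<in> Ob C" "B \<in> Ob C" shows
        "zero C A B \<in> Hom C A B \<and>
        (\<forall>f \<in> Hom C A B. \<forall>g \<in> Hom C A B. add C f g \<in> Hom C A B) \<and>
        (\<forall>r. \<forall>f \<in> Hom C A B. smul C r f \<in> Hom C A B) \<and>
        (\<forall>f \<in> Hom C A B. add C f (zero C A B) = f) \<and>
        (\<forall>f \<in> Hom C A B. smul C 0 f = zero C A B)"
proof -
  note h = bspec[OF bspec[OF HM[unfolded hom_modules_def] assms(1)] assms(2)]
  show ?thesis using h by (elim conjE) (intro conjI; assumption)
qed

lemma zero_arr[simp]: "A \<in> Ob C \<Longrightarrow> B \<in> Ob C \<Longrightarrow> zero C A B \<in> Arr C"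
  and dom_zero[simp]: "A \<in> Ob C \<Longrightarrow> B \<in> Ob C \<Longrightarrow> dom C (zero C A B) = A"
  and cod_zero[simp]: "A \<in> Ob C \<Longrightarrow> B \<in> Ob C \<Longrightarrow> cod C (zero C A B) = B"
  using HM' by (auto simp: Hom_def)

lemma add_all: "f \<in> Arr C \<Longrightarrow> g \<in> Arr C \<Longrightarrow> dom C g = dom C f \<Longrightarrow> cod C g = cod C f \<Longrightarrow>
   add C f g \<in> Arr C \<and> dom C (add C f g) = dom C f \<and> cod C (add C f g) = cod C f"
  using HM'[of "dom C f" "cod C f"] by (auto simp: Hom_def)

lemma add_arr[simp]: "f \<in> Arr C \<Longrightarrow> g \<in> Arr C \<Longrightarrow> dom C g = dom C f \<Longrightarrow> cod C g = cod C f \<Longrightarrow> add C f g \<in> Arr C"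
  and dom_add[simp]: "f \<in> Arr C \<Longrightarrow> g \<in> Arr C \<Longrightarrow> dom C g = dom C f \<Longrightarrow> cod C g = cod C f \<Longrightarrow> dom C (add C f g) = dom C f"
  and cod_add[simp]: "f \<in> Arr C \<Longrightarrow> g \<in> Arr C \<Longrightarrow> dom C g = dom C f \<Longrightarrow> cod C g = cod C f \<Longrightarrow> cod C (add C f g) = cod C f"
  using add_all by blast+

lemma smul_all: "f \<in> Arr C \<Longrightarrow> smul C r f \<in> Arr C \<and> dom C (smul C r f) = dom C f \<and> cod C (smul C r f) = cod C f"
  using HM'[of "dom C f" "cod C f"] by (auto simp: Hom_def)

lemma smul_arr[simp]: "f \<in> Arr C \<Longrightarrow> smul C r f \<in> Arr C"
  and dom_smul[simp]: "f \<in> Arr C \<Longrightarrow> dom C (smul C r f) = dom C f"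
  and cod_smul[simp]: "f \<in> Arr C \<Longrightarrow> cod C (smul C r f) = cod C f"
  using smul_all by blast+

lemma add_zero: "f \<in> Arr C \<Longrightarrow> dom C f = A \<Longrightarrow> cod C f = B \<Longrightarrow> add C f (zero C A B) = f"
  using HM'[of "dom C f" "cod C f"] by (auto simp: Hom_def)

lemma smul_zero: "f \<in> Arr C \<Longrightarrow> smul C 0 f = zero C (dom C f) (cod C f)"
  using HM'[of "dom C f" "cod C f"] by (auto simp: Hom_def)

lemma lin_pre: "f \<in> Arr C \<Longrightarrow> g \<in> Arr C \<Longrightarrow> x \<in> Arr C \<Longrightarrow> dom C g = dom C f \<Longrightarrow> cod C g = cod C f
  \<Longrightarrow> cod C x = dom C f \<Longrightarrow>
  comp C (add C (smul C r f) (smul C s g)) x = add C (smul C r (comp C f x)) (smul C s (comp C g x))"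
  using LL unfolding left_k_linear_cat_def Hom_def
  by (smt (verit, best) arr_cod arr_dom mem_Collect_eq)

lemma zero_as: "A \<in> Ob C \<Longrightarrow> B \<in> Ob C \<Longrightarrow>
  zero C A B = add C (smul C 0 (zero C A B)) (smul C 0 (zero C A B))"
  by (simp add: smul_zero add_zero)

lemma zero_comp[simp]: "x \<in> Arr C \<Longrightarrow> cod C x = A \<Longrightarrow> B \<in> Ob C \<Longrightarrow> comp C (zero C A B) x = zero C (dom C x) B"
proof -
  assume a: "x \<in> Arr C" "cod C x = A" "B \<in> Ob C"
  then have A: "A \<in> Ob C" by auto
  have "comp C (zero C A B) x = comp C (add C (smul C 0 (zero C A B)) (smul C 0 (zero C A B))) x"
    using zero_as[OF A a(3)] by simp
  also have "\<dots> = add C (smul C 0 (comp C (zero C A B) x)) (smul C 0 (comp C (zero C A B) x))"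
    using a A by (simp add: lin_pre)
  also have "\<dots> = zero C (dom C x) B" using a A by (simp add: smul_zero add_zero)
  finally show ?thesis .
qed


lemma FP': "termo C \<in> Ob C \<and> (\<forall>A \<in> Ob C. \<exists>!t. t \<in> Hom C A (termo C))"
  using FP unfolding has_finite_products_def by blast

lemma FP2: assumes "A \<in> Ob C" "B \<in> Ob C" shows
        "prod C A B \<in> Ob C \<and>
        p1 C A B \<in> Hom C (prod C A B) A \<and>
        p2 C A B \<in> Hom C (prod C A B) B \<and>
        (\<forall>X \<in> Ob C. \<forall>f \<in> Hom C X A. \<forall>g \<in> Hom C X B.
           pair C f g \<in> Hom C X (prod C A B) \<and>
           comp C (p1 C A B) (pair C f g) = f \<and>
           comp C (p2 C A B) (pair C f g) = g) \<and>
        (\<forall>X \<in> Ob C. \<forall>h \<in> Hom C X (prod C A B).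
           pair C (comp C (p1 C A B) h) (comp C (p2 C A B) h) = h)"
proof -
  have "\<forall>A \<in> Ob C. \<forall>B \<in> Ob C.
        prod C A B \<in> Ob C \<and>
        p1 C A B \<in> Hom C (prod C A B) A \<and>
        p2 C A B \<in> Hom C (prod C A B) B \<and>
        (\<forall>X \<in> Ob C. \<forall>f \<in> Hom C X A. \<forall>g \<in> Hom C X B.
           pair C f g \<in> Hom C X (prod C A B) \<and>
           comp C (p1 C A B) (pair C f g) = f \<and>
           comp C (p2 C A B) (pair C f g) = g) \<and>
        (\<forall>X \<in> Ob C. \<forall>h \<in> Hom C X (prod C A B).
           pair C (comp C (p1 C A B) h) (comp C (p2 C A B) h) = h)"
    using FP unfolding has_finite_products_def by blast
  from bspec[OF bspec[OF this assms(1)] assms(2)] show ?thesis .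
qed

lemma termo_ob[simp]: "termo C \<in> Ob C" using FP' by blast

lemma term_unique: "t \<in> Arr C \<Longrightarrow> u \<in> Arr C \<Longrightarrow> dom C u = dom C t \<Longrightarrow> cod C t = termo C \<Longrightarrow> cod C u = termo C \<Longrightarrow> t = u"
  using FP' unfolding Hom_def by (metis (mono_tags, lifting) arr_dom mem_Collect_eq)

lemma prod_ob[simp]: "A \<in> Ob C \<Longrightarrow> B \<in> Ob C \<Longrightarrow> prod C A B \<in> Ob C"
  using FP2 by blast

lemma p1_arr[simp]: "A \<in> Ob C \<Longrightarrow> B \<in> Ob C \<Longrightarrow> p1 C A B \<in> Arr C"
  and dom_p1[simp]: "A \<in> Ob C \<Longrightarrow> B \<in> Ob C \<Longrightarrow> dom C (p1 C A B) = prod C A B"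
  and cod_p1[simp]: "A \<in> Ob C \<Longrightarrow> B \<in> Ob C \<Longrightarrow> cod C (p1 C A B) = A"
  and p2_arr[simp]: "A \<in> Ob C \<Longrightarrow> B \<in> Ob C \<Longrightarrow> p2 C A B \<in> Arr C"
  and dom_p2[simp]: "A \<in> Ob C \<Longrightarrow> B \<in> Ob C \<Longrightarrow> dom C (p2 C A B) = prod C A B"
  and cod_p2[simp]: "A \<in> Ob C \<Longrightarrow> B \<in> Ob C \<Longrightarrow> cod C (p2 C A B) = B"
  using FP2 unfolding Hom_def by blast+

lemma pair_all: assumes "f \<in> Arr C" "g \<in> Arr C" "dom C g = dom C f"
  shows "pair C f g \<in> Arr C \<and> dom C (pair C f g) = dom C f \<and> cod C (pair C f g) = prod C (cod C f) (cod C g)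
    \<and> comp C (p1 C (cod C f) (cod C g)) (pair C f g) = f \<and> comp C (p2 C (cod C f) (cod C g)) (pair C f g) = g"
proof -
  have h: "\<forall>X \<in> Ob C. \<forall>f' \<in> Hom C X (cod C f). \<forall>g' \<in> Hom C X (cod C g).
           pair C f' g' \<in> Hom C X (prod C (cod C f) (cod C g)) \<and>
           comp C (p1 C (cod C f) (cod C g)) (pair C f' g') = f' \<and>
           comp C (p2 C (cod C f) (cod C g)) (pair C f' g') = g'"
    using FP2[of "cod C f" "cod C g"] assms by simp
  then have "pair C f g \<in> Hom C (dom C f) (prod C (cod C f) (cod C g)) \<and>
           comp C (p1 C (cod C f) (cod C g)) (pair C f g) = f \<and>
           comp C (p2 C (cod C f) (cod C g)) (pair C f g) = g"
    using h[rule_format, of "dom C f" f g] assms by (simp add: Hom_def)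
  then show ?thesis by (simp add: Hom_def)
qed

lemma pair_arr[simp]: "f \<in> Arr C \<Longrightarrow> g \<in> Arr C \<Longrightarrow> dom C g = dom C f \<Longrightarrow> pair C f g \<in> Arr C"
  and dom_pair[simp]: "f \<in> Arr C \<Longrightarrow> g \<in> Arr C \<Longrightarrow> dom C g = dom C f \<Longrightarrow> dom C (pair C f g) = dom C f"
  and cod_pair[simp]: "f \<in> Arr C \<Longrightarrow> g \<in> Arr C \<Longrightarrow> dom C g = dom C f \<Longrightarrow> cod C (pair C f g) = prod C (cod C f) (cod C g)"
  using pair_all by blast+

lemma p1_pair[simp]: "f \<in> Arr C \<Longrightarrow> g \<in> Arr C \<Longrightarrow> dom C g = dom C f \<Longrightarrow> cod C f = A \<Longrightarrow> cod C g = B \<Longrightarrow>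
   comp C (p1 C A B) (pair C f g) = f"
  and p2_pair[simp]: "f \<in> Arr C \<Longrightarrow> g \<in> Arr C \<Longrightarrow> dom C g = dom C f \<Longrightarrow> cod C f = A \<Longrightarrow> cod C g = B \<Longrightarrow>
   comp C (p2 C A B) (pair C f g) = g"
  using pair_all by blast+

lemma pair_eta: "h \<in> Arr C \<Longrightarrow> A \<in> Ob C \<Longrightarrow> B \<in> Ob C \<Longrightarrow> cod C h = prod C A B \<Longrightarrow>
   pair C (comp C (p1 C A B) h) (comp C (p2 C A B) h) = h"
  using FP2[of A B] unfolding Hom_def by auto

lemma pair_ext: "u \<in> Arr C \<Longrightarrow> v \<in> Arr C \<Longrightarrow> A \<in> Ob C \<Longrightarrow> B \<in> Ob C \<Longrightarrow> cod C u = prod C A B \<Longrightarrow> cod C v = prod C A B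
  \<Longrightarrow> comp C (p1 C A B) u = comp C (p1 C A B) v \<Longrightarrow> comp C (p2 C A B) u = comp C (p2 C A B) v \<Longrightarrow> u = v"
  by (metis pair_eta)

lemma pair_comp[simp]: "f \<in> Arr C \<Longrightarrow> g \<in> Arr C \<Longrightarrow> h \<in> Arr C \<Longrightarrow> dom C g = dom C f \<Longrightarrow> cod C h = dom C f \<Longrightarrow>
  comp C (pair C f g) h = pair C (comp C f h) (comp C g h)"
proof -
  assume a: "f \<in> Arr C" "g \<in> Arr C" "h \<in> Arr C" "dom C g = dom C f" "cod C h = dom C f"
  let ?k = "comp C (pair C f g) h"
  have "pair C (comp C (p1 C (cod C f) (cod C g)) ?k) (comp C (p2 C (cod C f) (cod C g)) ?k) = ?k"
    using a by (intro pair_eta) auto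
  moreover have "comp C (p1 C (cod C f) (cod C g)) ?k = comp C f h"
    using a by (simp flip: assoc)
  moreover have "comp C (p2 C (cod C f) (cod C g)) ?k = comp C g h"
    using a by (simp flip: assoc)
  ultimately show ?thesis by simp
qed

lemma S_ob_ob[simp]: "A \<in> Ob C \<Longrightarrow> S_ob C A \<in> Ob C"
  using SE unfolding S_endofunctor_def by blast

lemma S_all: assumes "f \<in> Arr C" shows "S_ar C f \<in> Arr C \<and> dom C (S_ar C f) = S_ob C (dom C f) \<and> cod C (S_ar C f) = S_ob C (cod C f)"
proof -
  have "\<forall>A \<in> Ob C. \<forall>B \<in> Ob C. \<forall>f \<in> Hom C A B. S_ar C f \<in> Hom C (S_ob C A) (S_ob C B)"
    using SE unfolding S_endofunctor_def by blast
  from this[rule_format, of "dom C f" "cod C f" f] assms show ?thesis by (simp add: Hom_def)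
qed

lemma S_arr[simp]: "f \<in> Arr C \<Longrightarrow> S_ar C f \<in> Arr C"
  and dom_S[simp]: "f \<in> Arr C \<Longrightarrow> dom C (S_ar C f) = S_ob C (dom C f)"
  and cod_S[simp]: "f \<in> Arr C \<Longrightarrow> cod C (S_ar C f) = S_ob C (cod C f)"
  using S_all by blast+

lemma S_id[simp]: "A \<in> Ob C \<Longrightarrow> S_ar C (ident C A) = ident C (S_ob C A)"
  using SE unfolding S_endofunctor_def by blast

lemma S_comp[simp]: "f \<in> Arr C \<Longrightarrow> g \<in> Arr C \<Longrightarrow> cod C f = dom C g \<Longrightarrow> S_ar C (comp C g f) = comp C (S_ar C g) (S_ar C f)"
proof -
  assume a: "f \<in> Arr C" "g \<in> Arr C" "cod C f = dom C g"
  have "\<forall>A \<in> Ob C. \<forall>B \<in> Ob C. \<forall>E \<in> Ob C. \<forall>f \<in> Hom C A B. \<forall>g \<in> Hom C B E.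
        S_ar C (comp C g f) = comp C (S_ar C g) (S_ar C f)"
    using SE unfolding S_endofunctor_def by blast
  from this[rule_format, of "dom C f" "cod C f" "cod C g" f g] a show ?thesis by (simp add: Hom_def)
qed

lemma theta_arr[simp]: "A \<in> Ob C \<Longrightarrow> theta C A \<in> Arr C"
  and dom_theta[simp]: "A \<in> Ob C \<Longrightarrow> dom C (theta C A) = A"
  and cod_theta[simp]: "A \<in> Ob C \<Longrightarrow> cod C (theta C A) = S_ob C A"
  using AK unfolding abstract_kleisli_def Hom_def by blast+

lemma S_lin: "f \<in> Arr C \<Longrightarrow> g \<in> Arr C \<Longrightarrow> dom C g = dom C f \<Longrightarrow> cod C g = cod C f \<Longrightarrow>
  S_ar C (add C (smul C r f) (smul C s g)) = add C (smul C r (S_ar C f)) (smul C s (S_ar C g))"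
proof -
  assume a: "f \<in> Arr C" "g \<in> Arr C" "dom C g = dom C f" "cod C g = cod C f"
  have "\<forall>A \<in> Ob C. \<forall>B \<in> Ob C. \<forall>r s. \<forall>f \<in> Hom C A B. \<forall>g \<in> Hom C A B.
        S_ar C (add C (smul C r f) (smul C s g)) = add C (smul C r (S_ar C f)) (smul C s (S_ar C g))"
    using SL unfolding S_strong_cartesian_k_linear_def by blast
  from this[rule_format, of "dom C f" "cod C f" f g] a show ?thesis by (simp add: Hom_def)
qed

lemma omega_iso: "A \<in> Ob C \<Longrightarrow> B \<in> Ob C \<Longrightarrow> is_iso C (omega C A B)"
  using SL unfolding S_strong_cartesian_k_linear_def by blast

lemma termS_iso: "t \<in> Hom C (S_ob C (termo C)) (termo C) \<Longrightarrow> is_iso C t"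
  using SL unfolding S_strong_cartesian_k_linear_def by blast

lemma S_Dif: "f \<in> Arr C \<Longrightarrow> is_inverse C w (omega C (dom C f) (dom C f)) \<Longrightarrow> Dif C (S_ar C f) = comp C (S_ar C (Dif C f)) w"
proof -
  assume a: "f \<in> Arr C" "is_inverse C w (omega C (dom C f) (dom C f))"
  have "\<forall>A \<in> Ob C. \<forall>B \<in> Ob C. \<forall>f \<in> Hom C A B. \<forall>w.
        is_inverse C w (omega C A A) \<longrightarrow> Dif C (S_ar C f) = comp C (S_ar C (Dif C f)) w"
    using SD unfolding S_strong_cartesian_k_differential_def by blast
  from this[rule_format, of "dom C f" "cod C f" f w] a show ?thesis by (simp add: Hom_def)
qed

lemma p1_nat: "A \<in> Ob C \<Longrightarrow> B \<in> Ob C \<Longrightarrow> comp C (theta C A) (p1 C A B) = comp C (S_ar C (p1 C A B)) (theta C (prod C A B))"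
  and p2_nat: "A \<in> Ob C \<Longrightarrow> B \<in> Ob C \<Longrightarrow> comp C (theta C B) (p2 C A B) = comp C (S_ar C (p2 C A B)) (theta C (prod C A B))"
  using PN unfolding theta_natural_def by auto

lemma theta_Dlin: "A \<in> Ob C \<Longrightarrow> Dif C (theta C A) = comp C (theta C A) (p2 C A A)"
  using DL unfolding D_linear_def by auto

lemma Dif_all: assumes "f \<in> Arr C" shows "Dif C f \<in> Arr C \<and> dom C (Dif C f) = prod C (dom C f) (dom C f) \<and> cod C (Dif C f) = cod C f"
proof -
  have "\<forall>A \<in> Ob C. \<forall>B \<in> Ob C. \<forall>f \<in> Hom C A B. Dif C f \<in> Hom C (prod C A A) B"
    apply (insert CKD[unfolded cartesian_k_differential_cat_def])
    apply (elim conjE) by assumption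
  from this[rule_format, of "dom C f" "cod C f" f] assms show ?thesis by (simp add: Hom_def)
qed

lemma Dif_arr[simp]: "f \<in> Arr C \<Longrightarrow> Dif C f \<in> Arr C"
  and dom_Dif[simp]: "f \<in> Arr C \<Longrightarrow> dom C (Dif C f) = prod C (dom C f) (dom C f)"
  and cod_Dif[simp]: "f \<in> Arr C \<Longrightarrow> cod C (Dif C f) = cod C f"
  using Dif_all by blast+

lemma CD5: "f \<in> Arr C \<Longrightarrow> g \<in> Arr C \<Longrightarrow> cod C f = dom C g \<Longrightarrow>
  Dif C (comp C g f) = comp C (Dif C g) (pair C (comp C f (p1 C (dom C f) (dom C f))) (Dif C f))"
proof -
  assume a: "f \<in> Arr C" "g \<in> Arr C" "cod C f = dom C g"
  have "\<forall>A \<in> Ob C. \<forall>B \<in> Ob C. \<forall>E \<in> Ob C. \<forall>f \<in> Hom C A B. \<forall>g \<in> Hom C B E.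
        Dif C (comp C g f) = comp C (Dif C g) (pair C (comp C f (p1 C A A)) (Dif C f))"
    apply (insert CKD[unfolded cartesian_k_differential_cat_def])
    apply (elim conjE) by assumption
  from this[rule_format, of "dom C f" "cod C f" "cod C g" f g] a show ?thesis by (simp add: Hom_def)
qed

lemma CD2: "f \<in> Arr C \<Longrightarrow> A = dom C f \<Longrightarrow>
        comp C (Dif C f) (pair C (p1 C A (prod C A A)) (add C (smul C r (comp C (p1 C A A) (p2 C A (prod C A A)))) (smul C s (comp C (p2 C A A) (p2 C A (prod C A A))))))
           = add C (smul C r (comp C (Dif C f) (pair C (p1 C A (prod C A A)) (comp C (p1 C A A) (p2 C A (prod C A A))))))
                   (smul C s (comp C (Dif C f) (pair C (p1 C A (prod C A A)) (comp C (p2 C A A) (p2 C A (prod C A A))))))"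
proof -
  assume a: "f \<in> Arr C" "A = dom C f"
  have "\<forall>A \<in> Ob C. \<forall>B \<in> Ob C. \<forall>r s. \<forall>f \<in> Hom C A B.
        let q1 = p1 C A (prod C A A);
            q2 = comp C (p1 C A A) (p2 C A (prod C A A));
            q3 = comp C (p2 C A A) (p2 C A (prod C A A))
        in comp C (Dif C f) (pair C q1 (add C (smul C r q2) (smul C s q3)))
           = add C (smul C r (comp C (Dif C f) (pair C q1 q2)))
                   (smul C s (comp C (Dif C f) (pair C q1 q3)))"
    apply (insert CKD[unfolded cartesian_k_differential_cat_def])
    apply (elim conjE) by assumption
  from this[rule_format, of "dom C f" "cod C f" f r s] a show ?thesis by (simp add: Hom_def Let_def)
qed


lemma Dlin_post:
  assumes f: "f \<in> Arr C" and A: "A = dom C f" and D: "Dif C f = comp C f (p2 C A A)"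
    and x: "x \<in> Arr C" "cod C x = A" and y: "y \<in> Arr C" "cod C y = A" "dom C y = dom C x"
  shows "comp C f (add C (smul C r x) (smul C s y)) = add C (smul C r (comp C f x)) (smul C s (comp C f y))"
proof -
  have Aob: "A \<in> Ob C" using A f by simp
  let ?P = "prod C A A"
  let ?q1 = "p1 C A ?P" and ?q2 = "comp C (p1 C A A) (p2 C A ?P)" and ?q3 = "comp C (p2 C A A) (p2 C A ?P)"
  let ?h = "pair C x (pair C x y)"
  have e: "comp C (Dif C f) (pair C ?q1 (add C (smul C r ?q2) (smul C s ?q3)))
           = add C (smul C r (comp C (Dif C f) (pair C ?q1 ?q2))) (smul C s (comp C (Dif C f) (pair C ?q1 ?q3)))"
    using CD2[OF f A] .
  have "comp C (comp C (Dif C f) (pair C ?q1 (add C (smul C r ?q2) (smul C s ?q3)))) ?h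
      = comp C (add C (smul C r (comp C (Dif C f) (pair C ?q1 ?q2))) (smul C s (comp C (Dif C f) (pair C ?q1 ?q3)))) ?h"
    using e by simp
  moreover have "comp C (comp C (Dif C f) (pair C ?q1 (add C (smul C r ?q2) (smul C s ?q3)))) ?h
      = comp C f (add C (smul C r x) (smul C s y))"
    using f x y Aob A by (simp add: lin_pre D)
  moreover have "comp C (add C (smul C r (comp C (Dif C f) (pair C ?q1 ?q2))) (smul C s (comp C (Dif C f) (pair C ?q1 ?q3)))) ?h
      = add C (smul C r (comp C f x)) (smul C s (comp C f y))"
    using f x y Aob A by (simp add: lin_pre D)
  ultimately show ?thesis by simp
qed


lemma theta_lin: "A \<in> Ob C \<Longrightarrow> x \<in> Arr C \<Longrightarrow> cod C x = A \<Longrightarrow> y \<in> Arr C \<Longrightarrow> cod C y = A \<Longrightarrow> dom C y = dom C x \<Longrightarrow>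
  comp C (theta C A) (add C (smul C r x) (smul C s y)) = add C (smul C r (comp C (theta C A) x)) (smul C s (comp C (theta C A) y))"
  by (rule Dlin_post) (simp_all add: theta_Dlin)

lemma theta_zero: "X \<in> Ob C \<Longrightarrow> A \<in> Ob C \<Longrightarrow> comp C (theta C A) (zero C X A) = zero C X (S_ob C A)"
proof -
  assume a: "X \<in> Ob C" "A \<in> Ob C"
  have "comp C (theta C A) (zero C X A) = comp C (theta C A) (add C (smul C 0 (zero C X A)) (smul C 0 (zero C X A)))"
    using zero_as[OF a] by simp
  also have "\<dots> = add C (smul C 0 (comp C (theta C A) (zero C X A))) (smul C 0 (comp C (theta C A) (zero C X A)))"
    using a by (intro theta_lin) auto
  also have "\<dots> = zero C X (S_ob C A)" using a by (simp add: smul_zero add_zero)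
  finally show ?thesis .
qed

lemma S_zero: "A \<in> Ob C \<Longrightarrow> B \<in> Ob C \<Longrightarrow> S_ar C (zero C A B) = zero C (S_ob C A) (S_ob C B)"
proof -
  assume a: "A \<in> Ob C" "B \<in> Ob C"
  have "S_ar C (zero C A B) = S_ar C (add C (smul C 0 (zero C A B)) (smul C 0 (zero C A B)))"
    using zero_as[OF a] by simp
  also have "\<dots> = add C (smul C 0 (S_ar C (zero C A B))) (smul C 0 (S_ar C (zero C A B)))"
    using a by (intro S_lin) auto
  also have "\<dots> = zero C (S_ob C A) (S_ob C B)" using a by (simp add: smul_zero add_zero)
  finally show ?thesis .
qed

lemma ST_unique: assumes "u \<in> Arr C" "v \<in> Arr C" "dom C v = dom C u" "cod C u = S_ob C (termo C)" "cod C v = S_ob C (termo C)"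
  shows "u = v"
proof -
  let ?t = "zero C (S_ob C (termo C)) (termo C)"
  have "?t \<in> Hom C (S_ob C (termo C)) (termo C)" by (simp add: Hom_def)
  then have "is_iso C ?t" by (rule termS_iso)
  then obtain g where g: "g \<in> Hom C (termo C) (S_ob C (termo C))" "comp C g ?t = ident C (S_ob C (termo C))"
    unfolding is_iso_def by auto
  have gA: "g \<in> Arr C" "dom C g = termo C" "cod C g = S_ob C (termo C)" using g by (auto simp: Hom_def)
  have "u = comp C (comp C g ?t) u" using g assms by simp
  also have "\<dots> = comp C g (comp C ?t u)" using gA assms by (simp del: zero_comp)
  also have "comp C ?t u = comp C ?t v" using assms by (intro term_unique) (auto simp del: zero_comp)
  also have "comp C g (comp C ?t v) = comp C (comp C g ?t) v" using gA assms by (simp del: zero_comp)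
  also have "\<dots> = v" using g assms by simp
  finally show ?thesis .
qed

lemma omega_props: "A \<in> Ob C \<Longrightarrow> B \<in> Ob C \<Longrightarrow> omega C A B \<in> Arr C \<and> dom C (omega C A B) = S_ob C (prod C A B)
   \<and> cod C (omega C A B) = prod C (S_ob C A) (S_ob C B)"
  unfolding omega_def by simp

lemma omega_inv: assumes "A \<in> Ob C" "B \<in> Ob C"
  obtains w where "w \<in> Arr C" "dom C w = prod C (S_ob C A) (S_ob C B)" "cod C w = S_ob C (prod C A B)"
    "comp C w (omega C A B) = ident C (S_ob C (prod C A B))" "is_inverse C w (omega C A B)"
proof -
  from omega_iso[OF assms] obtain g where g: "g \<in> Hom C (cod C (omega C A B)) (dom C (omega C A B))"
    "comp C g (omega C A B) = ident C (dom C (omega C A B))" "comp C (omega C A B) g = ident C (cod C (omega C A B))"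
    unfolding is_iso_def by auto
  show ?thesis
    apply (rule that[of g])
    using g omega_props[OF assms] by (auto simp: Hom_def is_inverse_def)
qed

lemma omega_mono: assumes "A \<in> Ob C" "B \<in> Ob C" "u \<in> Arr C" "v \<in> Arr C" "dom C v = dom C u"
  "cod C u = S_ob C (prod C A B)" "cod C v = S_ob C (prod C A B)"
  "comp C (S_ar C (p1 C A B)) u = comp C (S_ar C (p1 C A B)) v"
  "comp C (S_ar C (p2 C A B)) u = comp C (S_ar C (p2 C A B)) v"
  shows "u = v"
proof -
  obtain w where w: "w \<in> Arr C" "dom C w = prod C (S_ob C A) (S_ob C B)" "cod C w = S_ob C (prod C A B)"
    "comp C w (omega C A B) = ident C (S_ob C (prod C A B))" using omega_inv[OF assms(1,2)] by blast
  have o: "omega C A B \<in> Arr C" "dom C (omega C A B) = S_ob C (prod C A B)" "cod C (omega C A B) = prod C (S_ob C A) (S_ob C B)"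
    using omega_props[OF assms(1,2)] by auto
  have ou: "comp C (omega C A B) u = comp C (omega C A B) v"
    using assms unfolding omega_def by simp
  have "u = comp C (comp C w (omega C A B)) u" using w assms by simp
  also have "\<dots> = comp C w (comp C (omega C A B) u)" using w o assms by (intro assoc) auto
  also have "\<dots> = comp C w (comp C (omega C A B) v)" using ou by simp
  also have "\<dots> = comp C (comp C w (omega C A B)) v" using w o assms by (intro assoc[symmetric]) auto
  also have "\<dots> = v" using w assms by simp
  finally show ?thesis .
qed


lemma nat_id: "A \<in> Ob C \<Longrightarrow> theta_natural C (ident C A)"
  unfolding theta_natural_def by simp

lemma nat_comp: assumes f: "f \<in> Arr C" and g: "g \<in> Arr C" and fg: "cod C f = dom C g"
  and nf: "theta_natural C f" and ng: "theta_natural C g"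
  shows "theta_natural C (comp C g f)"
proof -
  have nf': "comp C (theta C (cod C f)) f = comp C (S_ar C f) (theta C (dom C f))"
    using nf unfolding theta_natural_def by auto
  have ng': "comp C (theta C (cod C g)) g = comp C (S_ar C g) (theta C (dom C g))"
    using ng unfolding theta_natural_def by auto
  have "comp C (theta C (cod C g)) (comp C g f) = comp C (comp C (theta C (cod C g)) g) f"
    using f g fg by simp
  also have "\<dots> = comp C (comp C (S_ar C g) (theta C (dom C g))) f" using ng' by simp
  also have "\<dots> = comp C (S_ar C g) (comp C (theta C (cod C f)) f)" using f g fg by simp
  also have "\<dots> = comp C (S_ar C g) (comp C (S_ar C f) (theta C (dom C f)))" using nf' by simp
  also have "\<dots> = comp C (S_ar C (comp C g f)) (theta C (dom C (comp C g f)))" using f g fg by simp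
  finally show ?thesis unfolding theta_natural_def using f g fg by simp
qed

lemma nat_term: "A \<in> Ob C \<Longrightarrow> theta_natural C (zero C A (termo C))"
  unfolding theta_natural_def by (auto intro: ST_unique)

lemma nat_zero: "A \<in> Ob C \<Longrightarrow> B \<in> Ob C \<Longrightarrow> theta_natural C (zero C A B)"
  unfolding theta_natural_def by (simp add: theta_zero S_zero)

lemma nat_proj: "A \<in> Ob C \<Longrightarrow> B \<in> Ob C \<Longrightarrow> theta_natural C (p1 C A B) \<and> theta_natural C (p2 C A B)"
  using PN by blast

lemma nat_pair: assumes f: "f \<in> Arr C" and g: "g \<in> Arr C" and fg: "dom C g = dom C f"
  and nf: "theta_natural C f" and ng: "theta_natural C g"
  shows "theta_natural C (pair C f g)"
proof -
  define A where "A = cod C f"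
  define B where "B = cod C g"
  define X where "X = dom C f"
  have ob: "A \<in> Ob C" "B \<in> Ob C" "X \<in> Ob C" using f g by (auto simp: A_def B_def X_def)
  have nf': "comp C (theta C A) f = comp C (S_ar C f) (theta C X)"
    using nf unfolding theta_natural_def A_def X_def by auto
  have ng': "comp C (theta C B) g = comp C (S_ar C g) (theta C X)"
    using ng fg unfolding theta_natural_def B_def X_def by auto
  have cf: "cod C f = A" "cod C g = B" "dom C f = X" "dom C g = X" using fg by (auto simp: A_def B_def X_def)
  have "comp C (theta C (prod C A B)) (pair C f g) = comp C (S_ar C (pair C f g)) (theta C X)"
  proof (rule omega_mono[OF ob(1,2)])
    have "comp C (S_ar C (p1 C A B)) (comp C (theta C (prod C A B)) (pair C f g))
        = comp C (comp C (S_ar C (p1 C A B)) (theta C (prod C A B))) (pair C f g)"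
      using f g cf ob by simp
    also have "\<dots> = comp C (comp C (theta C A) (p1 C A B)) (pair C f g)" using p1_nat[OF ob(1,2)] by simp
    also have "\<dots> = comp C (S_ar C f) (theta C X)" using f g cf ob nf' by simp
    also have "\<dots> = comp C (S_ar C (comp C (p1 C A B) (pair C f g))) (theta C X)" using f g cf ob by simp
    also have "\<dots> = comp C (S_ar C (p1 C A B)) (comp C (S_ar C (pair C f g)) (theta C X))"
      using f g cf ob by (simp del: p1_pair)
    finally show "comp C (S_ar C (p1 C A B)) (comp C (theta C (prod C A B)) (pair C f g))
        = comp C (S_ar C (p1 C A B)) (comp C (S_ar C (pair C f g)) (theta C X))" .
    have "comp C (S_ar C (p2 C A B)) (comp C (theta C (prod C A B)) (pair C f g))
        = comp C (comp C (S_ar C (p2 C A B)) (theta C (prod C A B))) (pair C f g)"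
      using f g cf ob by simp
    also have "\<dots> = comp C (comp C (theta C B) (p2 C A B)) (pair C f g)" using p2_nat[OF ob(1,2)] by simp
    also have "\<dots> = comp C (S_ar C g) (theta C X)" using f g cf ob ng' by simp
    also have "\<dots> = comp C (S_ar C (comp C (p2 C A B) (pair C f g))) (theta C X)" using f g cf ob by simp
    also have "\<dots> = comp C (S_ar C (p2 C A B)) (comp C (S_ar C (pair C f g)) (theta C X))"
      using f g cf ob by (simp del: p2_pair)
    finally show "comp C (S_ar C (p2 C A B)) (comp C (theta C (prod C A B)) (pair C f g))
        = comp C (S_ar C (p2 C A B)) (comp C (S_ar C (pair C f g)) (theta C X))" .
  qed (use f g cf ob in auto)
  then show ?thesis unfolding theta_natural_def using f g cf by simp
qed

lemma nat_lin: assumes f: "f \<in> Arr C" and g: "g \<in> Arr C" and fg: "dom C g = dom C f" "cod C g = cod C f"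
  and nf: "theta_natural C f" and ng: "theta_natural C g"
  shows "theta_natural C (add C (smul C r f) (smul C s g))"
proof -
  define A where "A = dom C f"
  define B where "B = cod C f"
  have ob: "A \<in> Ob C" "B \<in> Ob C" using f by (auto simp: A_def B_def)
  have cf: "cod C f = B" "cod C g = B" "dom C f = A" "dom C g = A" using fg by (auto simp: A_def B_def)
  have nf': "comp C (theta C B) f = comp C (S_ar C f) (theta C A)"
    using nf unfolding theta_natural_def A_def B_def by auto
  have ng': "comp C (theta C B) g = comp C (S_ar C g) (theta C A)"
    using ng cf unfolding theta_natural_def by auto
  have "comp C (theta C B) (add C (smul C r f) (smul C s g))
      = add C (smul C r (comp C (theta C B) f)) (smul C s (comp C (theta C B) g))"
    using f g cf ob by (intro theta_lin) auto
  also have "\<dots> = add C (smul C r (comp C (S_ar C f) (theta C A))) (smul C s (comp C (S_ar C g) (theta C A)))"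
    using nf' ng' by simp
  also have "\<dots> = comp C (add C (smul C r (S_ar C f)) (smul C s (S_ar C g))) (theta C A)"
    using f g cf ob by (intro lin_pre[symmetric]) auto
  also have "\<dots> = comp C (S_ar C (add C (smul C r f) (smul C s g))) (theta C A)"
    using f g cf by (simp add: S_lin)
  finally show ?thesis unfolding theta_natural_def using f g cf by simp
qed

lemma nat_Dif: assumes f: "f \<in> Arr C" and nf: "theta_natural C f"
  shows "theta_natural C (Dif C f)"
proof -
  define A where "A = dom C f"
  define B where "B = cod C f"
  have ob: "A \<in> Ob C" "B \<in> Ob C" using f by (auto simp: A_def B_def)
  have cf: "cod C f = B" "dom C f = A" by (auto simp: A_def B_def)
  have nf': "comp C (theta C B) f = comp C (S_ar C f) (theta C A)"
    using nf unfolding theta_natural_def A_def B_def by auto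
  obtain w where w: "w \<in> Arr C" "dom C w = prod C (S_ob C A) (S_ob C A)" "cod C w = S_ob C (prod C A A)"
    "comp C w (omega C A A) = ident C (S_ob C (prod C A A))" "is_inverse C w (omega C A A)"
    using omega_inv[OF ob(1) ob(1)] by blast
  have o: "omega C A A \<in> Arr C" "dom C (omega C A A) = S_ob C (prod C A A)" "cod C (omega C A A) = prod C (S_ob C A) (S_ob C A)"
    using omega_props[OF ob(1) ob(1)] by auto
  have 1: "Dif C (comp C (theta C B) f) = comp C (theta C B) (Dif C f)"
    using f cf ob by (simp add: CD5 theta_Dlin)
  have key: "comp C w (pair C (comp C (theta C A) (p1 C A A)) (comp C (theta C A) (p2 C A A))) = theta C (prod C A A)"
  proof -
    have "pair C (comp C (theta C A) (p1 C A A)) (comp C (theta C A) (p2 C A A)) = comp C (omega C A A) (theta C (prod C A A))"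
      unfolding omega_def using ob by (simp add: p1_nat p2_nat)
    then have "comp C w (pair C (comp C (theta C A) (p1 C A A)) (comp C (theta C A) (p2 C A A)))
        = comp C w (comp C (omega C A A) (theta C (prod C A A)))" by simp
    also have "\<dots> = comp C (comp C w (omega C A A)) (theta C (prod C A A))"
      using w o ob by (intro assoc[symmetric]) auto
    also have "\<dots> = theta C (prod C A A)" using w ob by simp
    finally show ?thesis .
  qed
  have "Dif C (comp C (S_ar C f) (theta C A)) = comp C (Dif C (S_ar C f)) (pair C (comp C (theta C A) (p1 C A A)) (Dif C (theta C A)))"
    using f cf ob by (simp add: CD5)
  also have "\<dots> = comp C (comp C (S_ar C (Dif C f)) w) (pair C (comp C (theta C A) (p1 C A A)) (comp C (theta C A) (p2 C A A)))"
    using S_Dif[OF f] w cf ob by (simp add: theta_Dlin)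
  also have "\<dots> = comp C (S_ar C (Dif C f)) (comp C w (pair C (comp C (theta C A) (p1 C A A)) (comp C (theta C A) (p2 C A A))))"
    using f w cf ob by (intro assoc) auto
  also have "\<dots> = comp C (S_ar C (Dif C f)) (theta C (prod C A A))" using key by simp
  finally have 2: "Dif C (comp C (S_ar C f) (theta C A)) = comp C (S_ar C (Dif C f)) (theta C (prod C A A))" .
  have "comp C (theta C B) (Dif C f) = comp C (S_ar C (Dif C f)) (theta C (prod C A A))"
    using 1 2 nf' by simp
  then show ?thesis unfolding theta_natural_def using f cf by simp
qed


lemma smul_one: assumes a: "f \<in> Arr C" shows "smul C 1 f = f"
proof -
  note h = bspec[OF bspec[OF HM[unfolded hom_modules_def] arr_dom[OF a]] arr_cod[OF a]]
  from h have "\<forall>f \<in> Hom C (dom C f) (cod C f). smul C 1 f = f" by (elim conjE) assumption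
  then show ?thesis using a by (simp add: Hom_def)
qed

lemma nat_add: "f \<in> Arr C \<Longrightarrow> g \<in> Arr C \<Longrightarrow> dom C g = dom C f \<Longrightarrow> cod C g = cod C f \<Longrightarrow>
  theta_natural C f \<Longrightarrow> theta_natural C g \<Longrightarrow> theta_natural C (add C f g)"
  using nat_lin[of f g 1 1] by (simp add: smul_one)

lemma nat_smul: "f \<in> Arr C \<Longrightarrow> theta_natural C f \<Longrightarrow> theta_natural C (smul C r f)"
  using nat_lin[of f f r 0] by (simp add: smul_zero add_zero)

lemma sub_simps[simp]: "Ob (theta_nat_sub C) = Ob C" "Arr (theta_nat_sub C) = {f \<in> Arr C. theta_natural C f}"
  "dom (theta_nat_sub C) = dom C" "cod (theta_nat_sub C) = cod C" "comp (theta_nat_sub C) = comp C"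
  "ident (theta_nat_sub C) = ident C" "smul (theta_nat_sub C) = smul C" "add (theta_nat_sub C) = add C"
  "zero (theta_nat_sub C) = zero C" "termo (theta_nat_sub C) = termo C" "prod (theta_nat_sub C) = prod C"
  "p1 (theta_nat_sub C) = p1 C" "p2 (theta_nat_sub C) = p2 C" "pair (theta_nat_sub C) = pair C"
  "Dif (theta_nat_sub C) = Dif C"
  by (simp_all add: theta_nat_sub_def)

lemma Hom_sub[simp]: "Hom (theta_nat_sub C) A B = {f \<in> Hom C A B. theta_natural C f}"
  by (auto simp: Hom_def)

lemma sub_cat: "is_category (theta_nat_sub C)"
  unfolding is_category_def Hom_sub sub_simps
  by (auto simp: Hom_def nat_id nat_comp)


lemma sub_HM: "hom_modules (theta_nat_sub C)"
  unfolding hom_modules_def Hom_sub sub_simps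
proof (intro ballI)
  fix A B assume A: "A \<in> Ob C" and B: "B \<in> Ob C"
  note h = bspec[OF bspec[OF HM[unfolded hom_modules_def] A] B]
  show "zero C A B \<in> {f \<in> Hom C A B. theta_natural C f} \<and>
    (\<forall>f\<in>{f \<in> Hom C A B. theta_natural C f}. \<forall>g\<in>{f \<in> Hom C A B. theta_natural C f}. add C f g \<in> {f \<in> Hom C A B. theta_natural C f}) \<and>
    (\<forall>r. \<forall>f\<in>{f \<in> Hom C A B. theta_natural C f}. smul C r f \<in> {f \<in> Hom C A B. theta_natural C f}) \<and>
    (\<forall>f\<in>{f \<in> Hom C A B. theta_natural C f}. \<forall>g\<in>{f \<in> Hom C A B. theta_natural C f}. \<forall>h\<in>{f \<in> Hom C A B. theta_natural C f}. add C (add C f g) h = add C f (add C g h)) \<and>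
    (\<forall>f\<in>{f \<in> Hom C A B. theta_natural C f}. \<forall>g\<in>{f \<in> Hom C A B. theta_natural C f}. add C f g = add C g f) \<and>
    (\<forall>f\<in>{f \<in> Hom C A B. theta_natural C f}. add C f (zero C A B) = f) \<and>
    (\<forall>r. \<forall>f\<in>{f \<in> Hom C A B. theta_natural C f}. \<forall>g\<in>{f \<in> Hom C A B. theta_natural C f}. smul C r (add C f g) = add C (smul C r f) (smul C r g)) \<and>
    (\<forall>r s. \<forall>f\<in>{f \<in> Hom C A B. theta_natural C f}. smul C (r + s) f = add C (smul C r f) (smul C s f)) \<and>
    (\<forall>r s. \<forall>f\<in>{f \<in> Hom C A B. theta_natural C f}. smul C (r * s) f = smul C r (smul C s f)) \<and>
    (\<forall>f\<in>{f \<in> Hom C A B. theta_natural C f}. smul C 1 f = f) \<and>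
    (\<forall>f\<in>{f \<in> Hom C A B. theta_natural C f}. smul C 0 f = zero C A B) \<and>
    (\<forall>r. smul C r (zero C A B) = zero C A B)"
  proof (intro conjI)
    show "zero C A B \<in> {f \<in> Hom C A B. theta_natural C f}" using A B by (simp add: Hom_def nat_zero)
    show "\<forall>f\<in>{f \<in> Hom C A B. theta_natural C f}. \<forall>g\<in>{f \<in> Hom C A B. theta_natural C f}. add C f g \<in> {f \<in> Hom C A B. theta_natural C f}"
      by (auto simp: Hom_def nat_add)
    show "\<forall>r. \<forall>f\<in>{f \<in> Hom C A B. theta_natural C f}. smul C r f \<in> {f \<in> Hom C A B. theta_natural C f}"
      by (auto simp: Hom_def nat_smul)
  qed (use h in \<open>elim conjE; blast\<close>)+
qed

lemma sub_LL: "left_k_linear_cat (theta_nat_sub C)"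
  unfolding left_k_linear_cat_def
proof (intro conjI)
  show "is_category (theta_nat_sub C)" by (rule sub_cat)
  show "hom_modules (theta_nat_sub C)" by (rule sub_HM)
  have h: "\<forall>X \<in> Ob C. \<forall>A \<in> Ob C. \<forall>B \<in> Ob C. \<forall>r s. \<forall>f \<in> Hom C A B. \<forall>g \<in> Hom C A B. \<forall>x \<in> Hom C X A.
        comp C (add C (smul C r f) (smul C s g)) x
          = add C (smul C r (comp C f x)) (smul C s (comp C g x))"
    using LL unfolding left_k_linear_cat_def by blast
  show "\<forall>X \<in> Ob (theta_nat_sub C). \<forall>A \<in> Ob (theta_nat_sub C). \<forall>B \<in> Ob (theta_nat_sub C). \<forall>r s. \<forall>f \<in> Hom (theta_nat_sub C) A B. \<forall>g \<in> Hom (theta_nat_sub C) A B. \<forall>x \<in> Hom (theta_nat_sub C) X A.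
        comp (theta_nat_sub C) (add (theta_nat_sub C) (smul (theta_nat_sub C) r f) (smul (theta_nat_sub C) s g)) x
          = add (theta_nat_sub C) (smul (theta_nat_sub C) r (comp (theta_nat_sub C) f x)) (smul (theta_nat_sub C) s (comp (theta_nat_sub C) g x))"
    using h by simp
qed

lemma sub_klin: "k_linear_map C f \<Longrightarrow> theta_natural C f \<Longrightarrow> k_linear_map (theta_nat_sub C) f"
  unfolding k_linear_map_def by auto

lemma sub_FP: "has_finite_products (theta_nat_sub C)"
  unfolding has_finite_products_def Hom_sub sub_simps
proof (intro conjI)
  show "termo C \<in> Ob C" by simp
  show "\<forall>A\<in>Ob C. \<exists>!t. t \<in> {f \<in> Hom C A (termo C). theta_natural C f}"
  proof
    fix A assume A: "A \<in> Ob C"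
    show "\<exists>!t. t \<in> {f \<in> Hom C A (termo C). theta_natural C f}"
    proof (rule ex1I[of _ "zero C A (termo C)"])
      show "zero C A (termo C) \<in> {f \<in> Hom C A (termo C). theta_natural C f}" using A by (simp add: Hom_def nat_term)
      fix t assume "t \<in> {f \<in> Hom C A (termo C). theta_natural C f}"
      then show "t = zero C A (termo C)" using A by (intro term_unique) (auto simp: Hom_def)
    qed
  qed
  show "\<forall>A\<in>Ob C. \<forall>B\<in>Ob C.
       prod C A B \<in> Ob C \<and>
       p1 C A B \<in> {f \<in> Hom C (prod C A B) A. theta_natural C f} \<and>
       p2 C A B \<in> {f \<in> Hom C (prod C A B) B. theta_natural C f} \<and>
       (\<forall>X\<in>Ob C. \<forall>f\<in>{f \<in> Hom C X A. theta_natural C f}. \<forall>g\<in>{f \<in> Hom C X B. theta_natural C f}.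
          pair C f g \<in> {f \<in> Hom C X (prod C A B). theta_natural C f} \<and>
          comp C (p1 C A B) (pair C f g) = f \<and> comp C (p2 C A B) (pair C f g) = g) \<and>
       (\<forall>X\<in>Ob C. \<forall>h\<in>{f \<in> Hom C X (prod C A B). theta_natural C f}.
          pair C (comp C (p1 C A B) h) (comp C (p2 C A B) h) = h)"
  proof (intro ballI)
    fix A B assume A: "A \<in> Ob C" and B: "B \<in> Ob C"
    note h = FP2[OF A B]
    have 1: "\<forall>X\<in>Ob C. \<forall>f\<in>{f \<in> Hom C X A. theta_natural C f}. \<forall>g\<in>{f \<in> Hom C X B. theta_natural C f}.
          pair C f g \<in> {f \<in> Hom C X (prod C A B). theta_natural C f} \<and>
          comp C (p1 C A B) (pair C f g) = f \<and> comp C (p2 C A B) (pair C f g) = g"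
      using h by (auto simp: Hom_def intro: nat_pair)
    have 2: "\<forall>X\<in>Ob C. \<forall>h\<in>{f \<in> Hom C X (prod C A B). theta_natural C f}.
          pair C (comp C (p1 C A B) h) (comp C (p2 C A B) h) = h"
      using h by blast
    show "prod C A B \<in> Ob C \<and>
       p1 C A B \<in> {f \<in> Hom C (prod C A B) A. theta_natural C f} \<and>
       p2 C A B \<in> {f \<in> Hom C (prod C A B) B. theta_natural C f} \<and>
       (\<forall>X\<in>Ob C. \<forall>f\<in>{f \<in> Hom C X A. theta_natural C f}. \<forall>g\<in>{f \<in> Hom C X B. theta_natural C f}.
          pair C f g \<in> {f \<in> Hom C X (prod C A B). theta_natural C f} \<and>
          comp C (p1 C A B) (pair C f g) = f \<and> comp C (p2 C A B) (pair C f g) = g) \<and>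
       (\<forall>X\<in>Ob C. \<forall>h\<in>{f \<in> Hom C X (prod C A B). theta_natural C f}.
          pair C (comp C (p1 C A B) h) (comp C (p2 C A B) h) = h)"
      using A B nat_proj[OF A B] 1 2 by (simp add: Hom_def)
  qed
qed


lemma sub_CL: "cartesian_left_k_linear_cat (theta_nat_sub C)"
  unfolding cartesian_left_k_linear_cat_def
proof (intro conjI ballI)
  show "left_k_linear_cat (theta_nat_sub C)" by (rule sub_LL)
  show "has_finite_products (theta_nat_sub C)" by (rule sub_FP)
  fix A B assume "A \<in> Ob (theta_nat_sub C)" "B \<in> Ob (theta_nat_sub C)"
  then have A: "A \<in> Ob C" and B: "B \<in> Ob C" by simp_all
  have "k_linear_map C (p1 C A B) \<and> k_linear_map C (p2 C A B)"
    using CL A B unfolding cartesian_left_k_linear_cat_def by blast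
  then show "k_linear_map (theta_nat_sub C) (p1 (theta_nat_sub C) A B)"
    "k_linear_map (theta_nat_sub C) (p2 (theta_nat_sub C) A B)"
    using nat_proj[OF A B] by (simp_all add: sub_klin)
qed

lemma sub_CKD: "cartesian_k_differential_cat (theta_nat_sub C)"
  unfolding cartesian_k_differential_cat_def Hom_sub sub_simps
proof (intro conjI)
  show "cartesian_left_k_linear_cat (theta_nat_sub C)" by (rule sub_CL)
  show "\<forall>A\<in>Ob C. \<forall>B\<in>Ob C. \<forall>f\<in>{f \<in> Hom C A B. theta_natural C f}. Dif C f \<in> {f \<in> Hom C (prod C A A) B. theta_natural C f}"
    by (auto simp: Hom_def nat_Dif)
qed (insert CKD[unfolded cartesian_k_differential_cat_def], (elim conjE),
     (rule restr1 restr2 restr3 restr4 restr5, assumption)?, assumption?)+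

end
theorem mainTheorem5:
  fixes C :: "('o, 'm, 'k::comm_semiring_1) cdak_struct"
  assumes "cartesian_k_differential_abstract_kleisli C"
  shows "(\<forall>A \<in> Ob C. theta_natural C (ident C A))
    \<and> (\<forall>f \<in> Arr C. \<forall>g \<in> Arr C. theta_natural C f \<longrightarrow> theta_natural C g \<longrightarrow>
          cod C f = dom C g \<longrightarrow> theta_natural C (comp C g f))
    \<and> (\<forall>A \<in> Ob C. theta_natural C (zero C A (termo C)))
    \<and> (\<forall>A \<in> Ob C. \<forall>B \<in> Ob C. theta_natural C (p1 C A B) \<and> theta_natural C (p2 C A B))
    \<and> (\<forall>X \<in> Ob C. \<forall>A \<in> Ob C. \<forall>B \<in> Ob C. \<forall>f \<in> Hom C X A. \<forall>g \<in> Hom C X B.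
          theta_natural C f \<longrightarrow> theta_natural C g \<longrightarrow> theta_natural C (pair C f g))
    \<and> (\<forall>A \<in> Ob C. \<forall>B \<in> Ob C. theta_natural C (zero C A B))
    \<and> (\<forall>A \<in> Ob C. \<forall>B \<in> Ob C. \<forall>r s. \<forall>f \<in> Hom C A B. \<forall>g \<in> Hom C A B.
          theta_natural C f \<longrightarrow> theta_natural C g \<longrightarrow>
          theta_natural C (add C (smul C r f) (smul C s g)))
    \<and> (\<forall>f \<in> Arr C. theta_natural C f \<longrightarrow> theta_natural C (Dif C f))
    \<and> cartesian_k_differential_cat (theta_nat_sub C)"
proof -
  interpret cdak C by (rule cdak.intro) (rule assms)
  show ?thesis
  proof (intro conjI)
    show "\<forall>A \<in> Ob C. theta_natural C (ident C A)" by (simp add: nat_id)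
    show "\<forall>f \<in> Arr C. \<forall>g \<in> Arr C. theta_natural C f \<longrightarrow> theta_natural C g \<longrightarrow>
          cod C f = dom C g \<longrightarrow> theta_natural C (comp C g f)" by (auto intro: nat_comp)
    show "\<forall>A \<in> Ob C. theta_natural C (zero C A (termo C))" by (simp add: nat_term)
    show "\<forall>A \<in> Ob C. \<forall>B \<in> Ob C. theta_natural C (p1 C A B) \<and> theta_natural C (p2 C A B)" by (simp add: nat_proj)
    show "\<forall>X \<in> Ob C. \<forall>A \<in> Ob C. \<forall>B \<in> Ob C. \<forall>f \<in> Hom C X A. \<forall>g \<in> Hom C X B.
          theta_natural C f \<longrightarrow> theta_natural C g \<longrightarrow> theta_natural C (pair C f g)"
      by (auto simp: Hom_def intro: nat_pair)
    show "\<forall>A \<in> Ob C. \<forall>B \<in> Ob C. theta_natural C (zero C A B)" by (simp add: nat_zero)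
    show "\<forall>A \<in> Ob C. \<forall>B \<in> Ob C. \<forall>r s. \<forall>f \<in> Hom C A B. \<forall>g \<in> Hom C A B.
          theta_natural C f \<longrightarrow> theta_natural C g \<longrightarrow>
          theta_natural C (add C (smul C r f) (smul C s g))"
      by (auto simp: Hom_def intro: nat_lin)
    show "\<forall>f \<in> Arr C. theta_natural C f \<longrightarrow> theta_natural C (Dif C f)" by (simp add: nat_Dif)
    show "cartesian_k_differential_cat (theta_nat_sub C)" by (rule sub_CKD)
  qed
qed

end
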